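(* Let $V$ be a finite-dimensional vector space over a field $\mathbb{F}$ with fixed basis $e_1,\dots,e_n$, and let $N(t)$ be a nonsingular $\mathbb{F}(t)$-linear map $V(t)\to V(t)$. If $L$ and $L'$ are subspaces of $\bigwedge V$ such that $x\wedge x'=0$ for all $x\in L$, $x'\in L'$, then also $y\wedge y'=0$ for all $y\in NL$, $y'\in NL'$.
   Context: $\mathbb{F}(t)$ is the field of rational functions in a transcendental $t$; $V(t)=V\otimes_{\mathbb{F}}\mathbb{F}(t)$, and $N(t)$ extends to $\bigwedge V(t)$ by $u_1\wedge\cdots\wedge u_r\mapsto N(t)u_1\wedge\cdots\wedge N(t)u_r$ and linearity. $\bigwedge V$ is given the basis of monomials $e_{s_1}\wedge\cdots\wedge e_{s_r}$, $s_1<\cdots<s_r$. Limit action: for nonzero $x\in\bigwedge V$, write $N(t)x$ in the monomial basis, multiply by a nonzero element of $\mathbb{F}(t)$ so that all coefficients are polynomials in $t$ with no common divisor of positive $t$-degree, and evaluate at $t=0$; the result is a nonzero element $Nx$ of $\bigwedge V$, well defined up to nonzero scalar. For a subspace $L$, $NL$ is the subspace spanned by $\{Nx:x\in L\setminus\{0\}\}$ (equivalently, the limit of $L$ as a point of the appropriate Grassmannian); it has the same dimension as $L$. *)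

theory Defs
  imports Main "HOL-Library.Function_Algebras" "HOL-Computational_Algebra.Polynomial"
    "HOL-Computational_Algebra.Fraction_Field"
begin

text \<open>Exterior algebra of V = K^n with basis e_0,...,e_(n-1) (indices 0..n-1).
  An element of the exterior algebra is its coefficient function on monomials
  e_S = e_(s1) wedge ... wedge e_(sr), s1 < ... < sr, indexed by the subset S of {..<n}.\<close>

definition ext_alg :: "nat \<Rightarrow> (nat set \<Rightarrow> 'k::zero) set" where
  "ext_alg n = {x. \<forall>S. \<not> S \<subseteq> {..<n} \<longrightarrow> x S = 0}"

definition escale :: "'k::times \<Rightarrow> (nat set \<Rightarrow> 'k) \<Rightarrow> (nat set \<Rightarrow> 'k)" where
  "escale c x = (\<lambda>S. c * x S)"

text \<open>sign of e_S wedge e_T for disjoint S, T: (-1)^(number of inversions)\<close>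
definition wsign :: "nat set \<Rightarrow> nat set \<Rightarrow> 'k::comm_ring_1" where
  "wsign S T = (-1) ^ card {(s, t). s \<in> S \<and> t \<in> T \<and> t < s}"

definition wedge :: "nat \<Rightarrow> (nat set \<Rightarrow> 'k::comm_ring_1) \<Rightarrow> (nat set \<Rightarrow> 'k) \<Rightarrow> (nat set \<Rightarrow> 'k)" where
  "wedge n x y = (\<lambda>U. if U \<subseteq> {..<n}
      then (\<Sum>S\<in>Pow U. wsign S (U - S) * x S * y (U - S)) else 0)"

definition monom_e :: "nat set \<Rightarrow> (nat set \<Rightarrow> 'k::{zero,one})" where
  "monom_e S = (\<lambda>U. if U = S then 1 else 0)"

text \<open>a vector v of K^n as an element of degree one\<close>
definition vec1 :: "nat \<Rightarrow> (nat \<Rightarrow> 'k::zero) \<Rightarrow> (nat set \<Rightarrow> 'k)" where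
  "vec1 n v = (\<lambda>U. if \<exists>i<n. U = {i} then v (the_elem U) else 0)"

type_synonym 'k ratfun = "'k poly fract"

text \<open>A linear map V(t) -> V(t) given by its matrix M (M i j = i-th coordinate of M e_j).\<close>
definition nonsingular :: "nat \<Rightarrow> (nat \<Rightarrow> nat \<Rightarrow> 'k::field ratfun) \<Rightarrow> bool" where
  "nonsingular n M \<longleftrightarrow> (\<forall>v. (\<forall>i<n. (\<Sum>j<n. M i j * v j) = 0) \<longrightarrow> (\<forall>j<n. v j = 0))"

definition ext_map_monom :: "nat \<Rightarrow> (nat \<Rightarrow> nat \<Rightarrow> 'k::field ratfun) \<Rightarrow> nat set \<Rightarrow> (nat set \<Rightarrow> 'k ratfun)" where
  "ext_map_monom n M S =
     foldr (wedge n) (map (\<lambda>s. vec1 n (\<lambda>i. M i s)) (sorted_list_of_set S)) (monom_e {})"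

definition ext_map :: "nat \<Rightarrow> (nat \<Rightarrow> nat \<Rightarrow> 'k::field ratfun) \<Rightarrow> (nat set \<Rightarrow> 'k ratfun) \<Rightarrow> (nat set \<Rightarrow> 'k ratfun)" where
  "ext_map n M x = (\<Sum>S\<in>Pow {..<n}. escale (x S) (ext_map_monom n M S))"

definition const_ext :: "(nat set \<Rightarrow> 'k::field) \<Rightarrow> (nat set \<Rightarrow> 'k ratfun)" where
  "const_ext x = (\<lambda>S. Fract [:x S:] 1)"

text \<open>y is (a representative of) the limit N x: rescale N(t)x by some nonzero c in F(t)
  so that all coefficients are polynomials p_S with no common divisor of positive degree,
  then evaluate at t = 0.\<close>
definition is_limit :: "nat \<Rightarrow> (nat \<Rightarrow> nat \<Rightarrow> 'k::field ratfun) \<Rightarrow> (nat set \<Rightarrow> 'k) \<Rightarrow> (nat set \<Rightarrow> 'k) \<Rightarrow> bool" where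
  "is_limit n M x y \<longleftrightarrow>
     (\<exists>c p. c \<noteq> 0 \<and>
        (\<forall>U. c * ext_map n M (const_ext x) U = Fract (p U) 1) \<and>
        (\<forall>d. degree d > 0 \<longrightarrow> \<not> (\<forall>U. d dvd p U)) \<and>
        (\<forall>U. y U = poly (p U) 0))"

definition limit_space :: "nat \<Rightarrow> (nat \<Rightarrow> nat \<Rightarrow> 'k::field ratfun) \<Rightarrow> (nat set \<Rightarrow> 'k) set \<Rightarrow> (nat set \<Rightarrow> 'k) set" where
  "limit_space n M L = module.span escale {y. \<exists>x\<in>L. x \<noteq> 0 \<and> is_limit n M x y}"

end

theory Submission
  imports Defs
begin


definition winv :: "nat set \<Rightarrow> nat set \<Rightarrow> nat" where
  "winv S T = card {(s, t). s \<in> S \<and> t \<in> T \<and> t < s}"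

lemma wsign_inv: "wsign S T = (-1) ^ winv S T"
  by (simp add: wsign_def winv_def)

lemma winv_union_left:
  assumes "finite A" "finite B" "finite C" "A \<inter> B = {}"
  shows "winv (A \<union> B) C = winv A C + winv B C"
proof -
  have e: "{(s, t). s \<in> A \<union> B \<and> t \<in> C \<and> t < s} =
    {(s, t). s \<in> A \<and> t \<in> C \<and> t < s} \<union> {(s, t). s \<in> B \<and> t \<in> C \<and> t < s}" by auto
  have f1: "finite {(s, t). s \<in> A \<and> t \<in> C \<and> t < s}"
    by (rule finite_subset[of _ "A \<times> C"]) (use assms in auto)
  have f2: "finite {(s, t). s \<in> B \<and> t \<in> C \<and> t < s}"
    by (rule finite_subset[of _ "B \<times> C"]) (use assms in auto)
  show ?thesis unfolding winv_def e
    by (rule card_Un_disjoint[OF f1 f2]) (use assms in auto)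
qed

lemma winv_union_right:
  assumes "finite A" "finite B" "finite C" "B \<inter> C = {}"
  shows "winv A (B \<union> C) = winv A B + winv A C"
proof -
  have e: "{(s, t). s \<in> A \<and> t \<in> B \<union> C \<and> t < s} =
    {(s, t). s \<in> A \<and> t \<in> B \<and> t < s} \<union> {(s, t). s \<in> A \<and> t \<in> C \<and> t < s}" by auto
  have f1: "finite {(s, t). s \<in> A \<and> t \<in> B \<and> t < s}"
    by (rule finite_subset[of _ "A \<times> B"]) (use assms in auto)
  have f2: "finite {(s, t). s \<in> A \<and> t \<in> C \<and> t < s}"
    by (rule finite_subset[of _ "A \<times> C"]) (use assms in auto)
  show ?thesis unfolding winv_def e
    by (rule card_Un_disjoint[OF f1 f2]) (use assms in auto)
qed

lemma winv_empty_left[simp]: "winv {} T = 0" by (simp add: winv_def)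

lemma winv_single_left: "winv {a} T = card {t \<in> T. t < a}"
proof -
  have "{(s, t). s \<in> {a} \<and> t \<in> T \<and> t < s} = (\<lambda>t. (a, t)) ` {t \<in> T. t < a}" by auto
  thus ?thesis unfolding winv_def by (simp add: card_image inj_on_def)
qed

lemma wedge_out: "\<not> U \<subseteq> {..<n} \<Longrightarrow> wedge n x y U = 0"
  by (simp add: wedge_def)

lemma wedge_in_ext: "wedge n x y \<in> ext_alg n"
  by (simp add: ext_alg_def wedge_def)

lemma wedge_in: "U \<subseteq> {..<n} \<Longrightarrow>
  wedge n x y U = (\<Sum>S\<in>Pow U. wsign S (U - S) * x S * y (U - S))"
  by (simp add: wedge_def)

lemma wedge_assoc:
  fixes x y z :: "nat set \<Rightarrow> 'a::comm_ring_1"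
  shows "wedge n (wedge n x y) z = wedge n x (wedge n y z)"
proof
  fix U
  show "wedge n (wedge n x y) z U = wedge n x (wedge n y z) U"
  proof (cases "U \<subseteq> {..<n}")
    case False thus ?thesis by (simp add: wedge_out)
  next
    case True
    have fU: "finite U" using True finite_subset by blast
    have "wedge n (wedge n x y) z U =
       (\<Sum>A\<in>Pow U. \<Sum>S\<in>Pow A. wsign A (U - A) * (wsign S (A - S) * x S * y (A - S)) * z (U - A))"
      using True by (auto simp: wedge_in sum_distrib_left sum_distrib_right intro!: sum.cong)
    also have "\<dots> = (\<Sum>(A, S)\<in>Sigma (Pow U) Pow.
        wsign A (U - A) * (wsign S (A - S) * x S * y (A - S)) * z (U - A))"
      by (rule sum.Sigma) (use fU in \<open>auto intro: finite_subset\<close>)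
    also have "\<dots> = (\<Sum>(S, B)\<in>Sigma (Pow U) (\<lambda>S. Pow (U - S)).
        wsign S (U - S) * x S * (wsign B (U - S - B) * y B * z (U - S - B)))"
    proof (rule sum.reindex_bij_witness[where i = "\<lambda>(S, B). (S \<union> B, S)" and j = "\<lambda>(A, S). (S, A - S)"])
      fix p assume p: "p \<in> Sigma (Pow U) Pow"
      obtain A S where pe: "p = (A, S)" by fastforce
      define B where "B = A - S"
      have SU: "S \<subseteq> U" "B \<subseteq> U - S" "S \<subseteq> A" "A \<subseteq> U" using p pe B_def by auto
      have AE: "A = S \<union> B" using SU B_def by auto
      have fin: "finite S" "finite B" "finite (U - S - B)" using SU fU by (auto intro: finite_subset)
      have d: "U - A = U - S - B" using SU AE by auto
      have u: "U - S = B \<union> (U - S - B)" using SU by auto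
      have "winv (S \<union> B) (U - S - B) + winv S B = winv S (U - S) + winv B (U - S - B)"
      proof -
        have "winv S (U - S) = winv S B + winv S (U - S - B)"
          using fin by (subst u) (rule winv_union_right, auto)
        moreover have "winv (S \<union> B) (U - S - B) = winv S (U - S - B) + winv B (U - S - B)"
          using fin SU by (intro winv_union_left) auto
        ultimately show ?thesis by simp
      qed
      hence "wsign (S \<union> B) (U - S - B) * wsign S B = (wsign S (U - S) * wsign B (U - S - B) :: 'a)"
        by (simp add: wsign_inv power_add[symmetric])
      hence "wsign A (U - A) * (wsign S (A - S) * x S * y (A - S)) * z (U - A) =
          wsign S (U - S) * x S * (wsign B (U - S - B) * y B * z (U - S - B))"
        unfolding d B_def[symmetric] by (simp add: AE[symmetric] algebra_simps)
      thus "(case (case p of (A, S) \<Rightarrow> (S, A - S)) of (S, B) \<Rightarrow> wsign S (U - S) * x S * (wsign B (U - S - B) * y B * z (U - S - B))) =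
         (case p of (A, S) \<Rightarrow> wsign A (U - A) * (wsign S (A - S) * x S * y (A - S)) * z (U - A))"
        unfolding pe B_def by simp
    qed auto
    also have "\<dots> = (\<Sum>S\<in>Pow U. \<Sum>B\<in>Pow (U - S).
        wsign S (U - S) * x S * (wsign B (U - S - B) * y B * z (U - S - B)))"
      by (rule sum.Sigma[symmetric]) (use fU in \<open>auto intro: finite_subset\<close>)
    also have "\<dots> = wedge n x (wedge n y z) U"
    proof -
      have "\<And>S. S \<subseteq> U \<Longrightarrow> wedge n y z (U - S) = (\<Sum>B\<in>Pow (U - S). wsign B (U - S - B) * y B * z (U - S - B))"
        using True by (intro wedge_in) auto
      thus ?thesis using True by (auto simp: wedge_in sum_distrib_left sum_distrib_right intro!: sum.cong)
    qed
    finally show ?thesis .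
  qed
qed



lemma wedge_zero_left[simp]: "wedge n 0 z = 0"
  by (rule ext) (simp add: wedge_def)

lemma wedge_zero_right[simp]: "wedge n z 0 = 0"
  by (rule ext) (simp add: wedge_def)

lemma wedge_add_left: "wedge n (x + y) z = wedge n x z + wedge n y z"
  by (rule ext) (simp add: wedge_def algebra_simps sum.distrib)

lemma wedge_add_right: "wedge n z (x + y) = wedge n z x + wedge n z y"
  by (rule ext) (simp add: wedge_def algebra_simps sum.distrib)

lemma wedge_scale_left: "wedge n (escale c x) z = escale c (wedge n x z)"
  by (rule ext) (simp add: wedge_def escale_def sum_distrib_left algebra_simps)

lemma wedge_scale_right: "wedge n z (escale c x) = escale c (wedge n z x)"
  by (rule ext) (simp add: wedge_def escale_def sum_distrib_left algebra_simps)

lemma wedge_neg_left: "wedge n (- x) z = - wedge n x z"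
  by (rule ext) (simp add: wedge_def sum_negf)

lemma wedge_sum_left:
  assumes "finite I"
  shows "wedge n (\<lambda>U. \<Sum>i\<in>I. f i U) y = (\<lambda>U. \<Sum>i\<in>I. wedge n (f i) y U)"
proof
  fix U show "wedge n (\<lambda>U. \<Sum>i\<in>I. f i U) y U = (\<Sum>i\<in>I. wedge n (f i) y U)"
    by (cases "U \<subseteq> {..<n}")
       (simp_all add: wedge_def sum_distrib_left sum_distrib_right algebra_simps sum.swap[of _ I])
qed

lemma wedge_sum_right:
  assumes "finite I"
  shows "wedge n y (\<lambda>U. \<Sum>i\<in>I. f i U) = (\<lambda>U. \<Sum>i\<in>I. wedge n y (f i) U)"
proof
  fix U show "wedge n y (\<lambda>U. \<Sum>i\<in>I. f i U) U = (\<Sum>i\<in>I. wedge n y (f i) U)"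
    by (cases "U \<subseteq> {..<n}")
       (simp_all add: wedge_def sum_distrib_left sum_distrib_right algebra_simps sum.swap[of _ I])
qed

lemma wedge_unit_left:
  assumes "x \<in> ext_alg n"
  shows "wedge n (monom_e {}) x = x"
proof
  fix U show "wedge n (monom_e {}) x U = x U"
  proof (cases "U \<subseteq> {..<n}")
    case False thus ?thesis using assms by (simp add: wedge_def ext_alg_def)
  next
    case True
    have "wedge n (monom_e {}) x U = (\<Sum>S\<in>Pow U. if S = {} then wsign {} U * x U else 0)"
      using True by (auto simp: wedge_in monom_e_def intro!: sum.cong)
    also have "\<dots> = wsign {} U * x U" using True by (intro trans[OF sum.delta]) (auto intro: finite_subset)
    also have "\<dots> = x U" by (simp add: wsign_inv)
    finally show ?thesis .
  qed
qed

lemma monom_e_empty_ext: "monom_e {} \<in> ext_alg n"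
  by (simp add: ext_alg_def monom_e_def)

lemma vec1_nz: "vec1 n a S \<noteq> 0 \<Longrightarrow> \<exists>i<n. S = {i}"
  by (auto simp: vec1_def split: if_splits)

lemma wedge_vec_zero:
  assumes "\<not> (\<exists>i j. i < j \<and> j < n \<and> U = {i, j})"
  shows "wedge n (vec1 n a) (vec1 n b) U = 0"
proof (cases "U \<subseteq> {..<n}")
  case False thus ?thesis by (simp add: wedge_out)
next
  case True
  have "wsign S (U - S) * vec1 n a S * vec1 n b (U - S) = 0" if "S \<in> Pow U" for S
  proof (rule ccontr)
    assume "\<not> ?thesis"
    hence "vec1 n a S \<noteq> 0" "vec1 n b (U - S) \<noteq> 0" by auto
    then obtain i j where ij: "i < n" "S = {i}" "j < n" "U - S = {j}" using vec1_nz by metis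
    hence "U = {i, j}" "i \<noteq> j" using that by auto
    show False
    proof (cases "i < j")
      case True thus False using assms \<open>U = {i, j}\<close> ij by blast
    next
      case False
      hence "j < i" "U = {j, i}" using \<open>i \<noteq> j\<close> \<open>U = {i, j}\<close> by auto
      thus False using assms ij by blast
    qed
  qed
  thus ?thesis using True by (simp add: wedge_in)
qed

lemma wedge_vec_pair:
  assumes "i < j" "j < n"
  shows "wedge n (vec1 n a) (vec1 n b) {i, j} = a i * b j - a j * b i"
proof -
  have P: "Pow {i, j} = {{}, {i}, {j}, {i, j}}" by (auto simp: Pow_def) 
  have ne: "{i} \<noteq> {j}" "{i,j} \<noteq> {i}" "{i,j} \<noteq> {j}" "{i,j} \<noteq> {}" using assms by auto
  have d: "{i, j} - {i} = {j}" "{i, j} - {j} = {i}" using assms by auto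
  have v: "vec1 n c {} = 0" "vec1 n c {i, j} = 0" "vec1 n c {i} = c i" "vec1 n c {j} = c j" for c
    using assms by (auto simp: vec1_def)
  have e1: "{t \<in> {j}. t < i} = {}" "{t \<in> {i}. t < j} = {i}" using assms by auto
  have w1: "wsign {i} {j} = (1::'a)" by (simp only: wsign_inv winv_single_left e1) simp
  have w2: "wsign {j} {i} = (-1::'a)" by (simp only: wsign_inv winv_single_left e1) simp
  have "wedge n (vec1 n a) (vec1 n b) {i, j} =
    (\<Sum>S\<in>{{}, {i}, {j}, {i, j}}. wsign S ({i, j} - S) * vec1 n a S * vec1 n b ({i, j} - S))"
    using assms by (simp add: wedge_in P)
  also have "\<dots> = a i * b j - a j * b i"
    using ne by (simp add: v d w1 w2)
  finally show ?thesis .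
qed

lemma wedge_vec_self: "wedge n (vec1 n a) (vec1 n a) = 0"
proof
  fix U show "wedge n (vec1 n a) (vec1 n a) U = 0 U"
    by (cases "\<exists>i j. i < j \<and> j < n \<and> U = {i, j}")
       (auto simp: wedge_vec_pair wedge_vec_zero mult.commute)
qed

lemma wedge_vec_anti: "wedge n (vec1 n a) (vec1 n b) = - wedge n (vec1 n b) (vec1 n a)"
proof
  fix U show "wedge n (vec1 n a) (vec1 n b) U = (- wedge n (vec1 n b) (vec1 n a)) U"
    by (cases "\<exists>i j. i < j \<and> j < n \<and> U = {i, j}")
       (auto simp: wedge_vec_pair wedge_vec_zero mult.commute)
qed


definition vv :: "nat \<Rightarrow> (nat \<Rightarrow> nat \<Rightarrow> 'a::comm_ring_1) \<Rightarrow> nat \<Rightarrow> (nat set \<Rightarrow> 'a)" where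
  "vv n M s = vec1 n (\<lambda>i. M i s)"
definition EP :: "nat \<Rightarrow> (nat \<Rightarrow> nat \<Rightarrow> 'a::comm_ring_1) \<Rightarrow> nat set \<Rightarrow> (nat set \<Rightarrow> 'a)" where
  "EP n M S = foldr (wedge n) (map (vv n M) (sorted_list_of_set S)) (monom_e {})"

lemma ext_map_monom_EP: "ext_map_monom n M S = EP n M S"
  unfolding ext_map_monom_def EP_def by (simp add: vv_def[abs_def])

lemma EP_empty: "EP n M {} = monom_e {}"
  by (simp add: EP_def)
lemma EP_Min:
  assumes "finite S" "S \<noteq> {}"
  shows "EP n M S = wedge n (vv n M (Min S)) (EP n M (S - {Min S}))"
  unfolding EP_def by (simp only: sorted_list_of_set_nonempty[OF assms] list.map foldr_Cons o_apply)

lemma EP_ext: "EP n M S \<in> ext_alg n"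
  by (cases "sorted_list_of_set S") (simp_all add: EP_def monom_e_empty_ext wedge_in_ext)

lemma vv_ext: "vv n M a \<in> ext_alg n"
  by (auto simp: ext_alg_def vv_def vec1_def)

lemma wedge_vv_self: "wedge n (vv n M a) (vv n M a) = 0"
  by (simp add: vv_def wedge_vec_self)

lemma wedge_vv_anti: "wedge n (vv n M a) (vv n M b) = - wedge n (vv n M b) (vv n M a)"
  unfolding vv_def by (rule wedge_vec_anti)

lemma escale_zero[simp]: "escale (c::'a::comm_ring_1) 0 = 0"
  by (simp add: escale_def fun_eq_iff)

lemma escale_escale: "escale (c::'a::comm_ring_1) (escale d x) = escale (c * d) x"
  by (simp add: escale_def fun_eq_iff mult.assoc)

lemma escale_neg: "- escale (c::'a::comm_ring_1) x = escale (- c) x"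
  by (simp add: escale_def fun_eq_iff)


lemma EP_insert:
  assumes "finite R"
  shows "wedge n (vv n M a) (EP n M R) =
    (if a \<in> R then 0 else escale ((-1) ^ card {r \<in> R. r < a}) (EP n M (insert a R)))"
  using assms
proof (induction R arbitrary: a rule: finite_remove_induct)
  case empty
  have "EP n M {a} = wedge n (vv n M a) (EP n M {})"
    using EP_Min[of "{a}" n M] by simp
  thus ?case by (simp add: escale_def)
next
  case (remove R)
  define b where "b = Min R"
  have bR: "b \<in> R" using remove b_def by simp
  have bmin: "\<And>r. r \<in> R \<Longrightarrow> b \<le> r" using remove b_def by simp
  have ER: "EP n M R = wedge n (vv n M b) (EP n M (R - {b}))"
    using EP_Min remove b_def by blast
  consider "a < b" | "a = b" | "b < a" by linarith
  thus ?case
  proof cases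
    case 1
    have aR: "a \<notin> R" using 1 bmin by force
    have c0: "{r \<in> R. r < a} = {}" using 1 bmin by force
    have m: "Min (insert a R) = a"
    proof (rule Min_eqI)
      show "finite (insert a R)" using remove by simp
      fix y assume "y \<in> insert a R"
      thus "a \<le> y" using 1 bmin by fastforce
    qed simp
    have "insert a R - {a} = R" using aR by auto
    hence "EP n M (insert a R) = wedge n (vv n M a) (EP n M R)"
      using EP_Min[of "insert a R" n M] remove m by simp
    moreover have "escale ((-1) ^ card {r \<in> R. r < a}) (EP n M (insert a R)) = EP n M (insert a R)"
      unfolding c0 by (simp add: escale_def)
    ultimately show ?thesis using aR by simp
  next
    case 2
    have "wedge n (vv n M a) (EP n M R) = wedge n (wedge n (vv n M a) (vv n M a)) (EP n M (R - {b}))"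
      using ER 2 by (simp add: wedge_assoc)
    thus ?thesis using 2 bR by (simp add: wedge_vv_self)
  next
    case 3
    have IH: "wedge n (vv n M a) (EP n M (R - {b})) = (if a \<in> R - {b} then 0 else
        escale ((-1) ^ card {r \<in> R - {b}. r < a}) (EP n M (insert a (R - {b}))))"
      using remove.IH[OF bR] .
    have "wedge n (vv n M a) (EP n M R) = wedge n (wedge n (vv n M a) (vv n M b)) (EP n M (R - {b}))"
      using ER by (simp add: wedge_assoc)
    also have "\<dots> = - wedge n (vv n M b) (wedge n (vv n M a) (EP n M (R - {b})))"
      by (simp add: wedge_vv_anti[of n M a b] wedge_neg_left wedge_assoc)
    finally have X: "wedge n (vv n M a) (EP n M R) = - wedge n (vv n M b) (wedge n (vv n M a) (EP n M (R - {b})))" .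
    show ?thesis
    proof (cases "a \<in> R")
      case True thus ?thesis using X IH 3 by simp
    next
      case False
      have m: "Min (insert a R) = b"
      proof (rule Min_eqI)
        show "finite (insert a R)" using remove by simp
        fix y assume "y \<in> insert a R"
        thus "b \<le> y" using 3 bmin by fastforce
      qed (use bR in simp)
      have ins: "insert a R - {b} = insert a (R - {b})" using 3 by auto
      have EI: "EP n M (insert a R) = wedge n (vv n M b) (EP n M (insert a (R - {b})))"
        using EP_Min[of "insert a R" n M] remove m ins by simp
      have cs: "{r \<in> R. r < a} = insert b {r \<in> R - {b}. r < a}" using 3 bR by auto
      have cc: "card {r \<in> R. r < a} = Suc (card {r \<in> R - {b}. r < a})"
        unfolding cs using remove by (subst card_insert_disjoint) auto
      show ?thesis using X IH False EI
        by (simp add: wedge_scale_right cc escale_neg)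
    qed
  qed
qed


lemma escale_one[simp]: "escale (1::'a::comm_ring_1) x = x"
  by (simp add: escale_def)

lemma EP_mult:
  assumes "finite S" "finite T"
  shows "wedge n (EP n M S) (EP n M T) =
    (if S \<inter> T = {} then escale (wsign S T) (EP n M (S \<union> T)) else 0)"
  using assms(1)
proof (induction S rule: finite_remove_induct)
  case empty
  thus ?case by (simp add: EP_empty wedge_unit_left EP_ext wsign_inv)
next
  case (remove S)
  define a where "a = Min S"
  have aS: "a \<in> S" using remove a_def by simp
  have amin: "\<And>r. r \<in> S \<Longrightarrow> a \<le> r" using remove a_def by simp
  define S' where "S' = S - {a}"
  have fS': "finite S'" using remove S'_def by simp
  have ES: "EP n M S = wedge n (vv n M a) (EP n M S')"
    using EP_Min remove a_def S'_def by blast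
  have IH: "wedge n (EP n M S') (EP n M T) =
    (if S' \<inter> T = {} then escale (wsign S' T) (EP n M (S' \<union> T)) else 0)"
    using remove.IH[OF aS] S'_def by (simp add: fun_eq_iff)
  have L: "wedge n (EP n M S) (EP n M T) = wedge n (vv n M a) (wedge n (EP n M S') (EP n M T))"
    using ES by (simp add: wedge_assoc)
  show ?case
  proof (cases "S' \<inter> T = {}")
    case False
    hence "S \<inter> T \<noteq> {}" using S'_def by auto
    thus ?thesis using L IH False by simp
  next
    case True
    have aS': "a \<notin> S'" using S'_def by simp
    have X: "wedge n (EP n M S) (EP n M T) = escale (wsign S' T) (if a \<in> S' \<union> T then 0 else
        escale ((-1) ^ card {r \<in> S' \<union> T. r < a}) (EP n M (insert a (S' \<union> T))))"
      using L IH True by (simp add: wedge_scale_right EP_insert fS' assms(2))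
    show ?thesis
    proof (cases "a \<in> T")
      case True
      hence "S \<inter> T \<noteq> {}" using aS by auto
      thus ?thesis using X True by simp
    next
      case aT: False
      have disj: "S \<inter> T = {}" using True aT S'_def by auto
      have ins: "insert a (S' \<union> T) = S \<union> T" using aS S'_def by auto
      have cs: "{r \<in> S' \<union> T. r < a} = {t \<in> T. t < a}"
        using amin S'_def by fastforce
      have SE: "S = {a} \<union> S'" using aS S'_def by auto
      have "winv S T = winv {a} T + winv S' T"
        unfolding SE using fS' assms(2) aS' by (intro winv_union_left) auto
      hence ws: "wsign S T = ((-1) ^ card {t \<in> T. t < a} * wsign S' T :: 'a)"
        by (simp add: wsign_inv winv_single_left power_add)
      show ?thesis using X[unfolded cs ins] aT aS' disj
        by (simp add: ws escale_escale mult.commute)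
    qed
  qed
qed



lemma sum_fun_apply: "(sum f A) x = (\<Sum>a\<in>A. f a x)"
  by (induction A rule: infinite_finite_induct) auto

definition EM :: "nat \<Rightarrow> (nat \<Rightarrow> nat \<Rightarrow> 'a::comm_ring_1) \<Rightarrow> (nat set \<Rightarrow> 'a) \<Rightarrow> (nat set \<Rightarrow> 'a)" where
  "EM n M x = (\<lambda>W. \<Sum>S\<in>Pow {..<n}. x S * EP n M S W)"

lemma ext_map_EM: "ext_map n M x = EM n M x"
  by (rule ext) (simp add: ext_map_def EM_def sum_fun_apply escale_def ext_map_monom_EP)

lemma tri_prod: "(c::'a::comm_ring_1) * sum p I * sum q J = (\<Sum>i\<in>I. \<Sum>j\<in>J. c * p i * q j)"
  by (subst sum_distrib_left[of c p I]) (rule sum_product)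

lemma wedge_bisum:
  assumes "finite I" "finite J"
  shows "wedge n (\<lambda>U. \<Sum>i\<in>I. a i * f i U) (\<lambda>U. \<Sum>j\<in>J. b j * g j U) W =
    (\<Sum>i\<in>I. \<Sum>j\<in>J. a i * b j * wedge n (f i) (g j) W)"
proof (cases "W \<subseteq> {..<n}")
  case False thus ?thesis by (simp add: wedge_out)
next
  case True
  have "wedge n (\<lambda>U. \<Sum>i\<in>I. a i * f i U) (\<lambda>U. \<Sum>j\<in>J. b j * g j U) W =
    (\<Sum>S\<in>Pow W. \<Sum>i\<in>I. \<Sum>j\<in>J. a i * b j * (wsign S (W - S) * f i S * g j (W - S)))"
    using True unfolding wedge_in[OF True]
    by (intro sum.cong refl) (simp only: mult.assoc[symmetric] tri_prod, intro sum.cong refl, simp only: ac_simps)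
  also have "\<dots> = (\<Sum>i\<in>I. \<Sum>S\<in>Pow W. \<Sum>j\<in>J. a i * b j * (wsign S (W - S) * f i S * g j (W - S)))"
    by (rule sum.swap)
  also have "\<dots> = (\<Sum>i\<in>I. \<Sum>j\<in>J. \<Sum>S\<in>Pow W. a i * b j * (wsign S (W - S) * f i S * g j (W - S)))"
    by (intro sum.cong refl sum.swap)
  also have "\<dots> = (\<Sum>i\<in>I. \<Sum>j\<in>J. a i * b j * wedge n (f i) (g j) W)"
    unfolding wedge_in[OF True] by (simp add: sum_distrib_left)
  finally show ?thesis .
qed

lemma EM_mult:
  fixes x y :: "nat set \<Rightarrow> 'a::comm_ring_1"
  shows "EM n M (wedge n x y) = wedge n (EM n M x) (EM n M y)"
proof
  fix W
  let ?P = "Pow {..<n::nat}"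
  have fP: "finite ?P" by simp
  have "wedge n (EM n M x) (EM n M y) W =
     (\<Sum>S\<in>?P. \<Sum>T\<in>?P. x S * y T * wedge n (EP n M S) (EP n M T) W)"
    unfolding EM_def by (rule wedge_bisum) auto
  also have "\<dots> = (\<Sum>S\<in>?P. \<Sum>T\<in>?P. if S \<inter> T = {} then x S * y T * (wsign S T * EP n M (S \<union> T) W) else 0)"
    by (intro sum.cong refl) (auto simp: EP_mult finite_subset escale_def)
  also have "\<dots> = (\<Sum>S\<in>?P. \<Sum>T\<in>{T\<in>?P. S \<inter> T = {}}. x S * y T * (wsign S T * EP n M (S \<union> T) W))"
    by (rule sum.cong[OF refl]) (rule sum.inter_filter[symmetric], simp)
  also have "\<dots> = (\<Sum>(S, T)\<in>Sigma ?P (\<lambda>S. {T\<in>?P. S \<inter> T = {}}). x S * y T * (wsign S T * EP n M (S \<union> T) W))"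
    by (rule sum.Sigma) auto
  also have "\<dots> = (\<Sum>(R, S)\<in>Sigma ?P Pow. wsign S (R - S) * x S * y (R - S) * EP n M R W)"
  proof (rule sum.reindex_bij_witness[where j = "\<lambda>(S, T). (S \<union> T, S)" and i = "\<lambda>(R, S). (S, R - S)"])
    fix p assume p: "p \<in> Sigma ?P (\<lambda>S. {T\<in>?P. S \<inter> T = {}})"
    obtain S T where pe: "p = (S, T)" by fastforce
    have "S \<inter> T = {}" using p pe by auto
    hence "S \<union> T - S = T" by auto
    thus "(case (case p of (S, T) \<Rightarrow> (S \<union> T, S)) of (R, S) \<Rightarrow> wsign S (R - S) * x S * y (R - S) * EP n M R W) =
      (case p of (S, T) \<Rightarrow> x S * y T * (wsign S T * EP n M (S \<union> T) W))"
      unfolding pe by (simp add: algebra_simps)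
  qed auto
  also have "\<dots> = (\<Sum>R\<in>?P. \<Sum>S\<in>Pow R. wsign S (R - S) * x S * y (R - S) * EP n M R W)"
    by (rule sum.Sigma[symmetric]) (auto intro: finite_subset)
  also have "\<dots> = EM n M (wedge n x y) W"
    unfolding EM_def by (intro sum.cong refl) (auto simp: wedge_in sum_distrib_right)
  finally show "EM n M (wedge n x y) W = wedge n (EM n M x) (EM n M y) W" by simp
qed



lemma hom_sum:
  fixes f :: "'a::comm_ring_1 \<Rightarrow> 'b::comm_ring_1"
  assumes add: "\<And>a b. f (a + b) = f a + f b" and z: "f 0 = 0"
  shows "f (sum g A) = (\<Sum>a\<in>A. f (g a))"
  by (induction A rule: infinite_finite_induct) (simp_all add: add z)

lemma wedge_hom:
  fixes f :: "'a::comm_ring_1 \<Rightarrow> 'b::comm_ring_1"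
  assumes add: "\<And>a b. f (a + b) = f a + f b" and mul: "\<And>a b. f (a * b) = f a * f b"
    and one: "f 1 = 1"
  shows "f (wedge n x y U) = wedge n (\<lambda>S. f (x S)) (\<lambda>S. f (y S)) U"
proof -
  have z: "f 0 = 0"
  proof -
    have "f 0 = f 0 + f 0" using add[of 0 0] by simp
    thus ?thesis by simp
  qed
  have m1: "f (-1) = -1"
  proof -
    have "f (-1) + f 1 = 0" using add[of "-1" 1] z by simp
    hence "f (-1) = - f 1" by (simp add: eq_neg_iff_add_eq_0)
    thus ?thesis using one by simp
  qed
  have pw: "f ((-1) ^ k) = (-1) ^ k" for k
    by (induction k) (simp_all only: power_Suc power_0 one mul m1)
  have ws: "f (wsign S T) = wsign S T" for S T
    by (simp add: wsign_inv pw)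
  show ?thesis
    by (cases "U \<subseteq> {..<n}") (simp_all add: wedge_def z hom_sum[of f, OF add z] mul ws)
qed

lemma const_ext_wedge:
  fixes x y :: "nat set \<Rightarrow> 'k::field"
  shows "const_ext (wedge n x y) = wedge n (const_ext x) (const_ext y)"
proof
  fix U
  show "const_ext (wedge n x y) U = wedge n (const_ext x) (const_ext y) U"
    unfolding const_ext_def
    by (rule wedge_hom[where f = "\<lambda>a. Fract [:a:] 1"]) (simp_all add: One_fract_def mult.commute flip: one_pCons)
qed

lemma fract_one_zero: "Fract (a::'a::idom) 1 = 0 \<longleftrightarrow> a = 0"
  by (simp add: Zero_fract_def eq_fract)

lemma EM_zero: "EM n M 0 = 0"
  by (simp add: EM_def fun_eq_iff)

lemma limits_wedge:
  fixes M :: "nat \<Rightarrow> nat \<Rightarrow> 'k::field ratfun" and x x' y y' :: "nat set \<Rightarrow> 'k"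
  assumes "wedge n x x' = 0" "is_limit n M x y" "is_limit n M x' y'"
  shows "wedge n y y' = 0"
proof -
  obtain c p where c: "c \<noteq> 0" "\<And>U. c * ext_map n M (const_ext x) U = Fract (p U) 1"
      and y: "\<And>U. y U = poly (p U) 0"
    using assms(2) unfolding is_limit_def by blast
  obtain c' p' where c': "c' \<noteq> 0" "\<And>U. c' * ext_map n M (const_ext x') U = Fract (p' U) 1"
      and y': "\<And>U. y' U = poly (p' U) 0"
    using assms(3) unfolding is_limit_def by blast
  define X where "X = EM n M (const_ext x)"
  define X' where "X' = EM n M (const_ext x')"
  have ce0: "const_ext (0 :: nat set \<Rightarrow> 'k) = 0" by (simp add: const_ext_def fun_eq_iff Zero_fract_def)
  have XX: "wedge n X X' = 0"
    unfolding X_def X'_def EM_mult[symmetric] const_ext_wedge[symmetric] assms(1) ce0 EM_zero ..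
  have P: "(\<lambda>U. Fract (p U) 1) = escale c X" using c(2) by (simp add: X_def ext_map_EM escale_def fun_eq_iff)
  have P': "(\<lambda>U. Fract (p' U) 1) = escale c' X'" using c'(2) by (simp add: X'_def ext_map_EM escale_def fun_eq_iff)
  have W: "wedge n (\<lambda>U. Fract (p U) 1) (\<lambda>U. Fract (p' U) 1) = 0"
    unfolding P P' by (simp add: wedge_scale_left wedge_scale_right XX)
  have pp: "wedge n p p' U = 0" for U
  proof -
    have "Fract (wedge n p p' U) 1 = wedge n (\<lambda>U. Fract (p U) 1) (\<lambda>U. Fract (p' U) 1) U"
      by (rule wedge_hom[where f = "\<lambda>a. Fract a 1"]) (simp_all add: One_fract_def)
    thus ?thesis using W by (simp add: fract_one_zero)
  qed
  have yy: "y = (\<lambda>U. poly (p U) 0)" "y' = (\<lambda>U. poly (p' U) 0)" using y y' by (auto simp: fun_eq_iff)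
  show ?thesis
  proof
    fix U
    have "poly (wedge n p p' U) 0 = wedge n y y' U"
      unfolding yy by (rule wedge_hom[where f = "\<lambda>a. poly a 0"]) simp_all
    thus "wedge n y y' U = 0 U" using pp by simp
  qed
qed

lemma module_escale: "module (escale :: 'a::comm_ring_1 \<Rightarrow> (nat set \<Rightarrow> 'a) \<Rightarrow> (nat set \<Rightarrow> 'a))"
  by standard (simp_all add: escale_def fun_eq_iff algebra_simps)

theorem lemma2p6:
  fixes n :: nat and M :: "nat \<Rightarrow> nat \<Rightarrow> 'k::field ratfun"
    and L L' :: "(nat set \<Rightarrow> 'k) set"
  assumes "nonsingular n M"
    and "module.subspace escale L" and "L \<subseteq> ext_alg n"
    and "module.subspace escale L'" and "L' \<subseteq> ext_alg n"
    and "\<forall>x\<in>L. \<forall>x'\<in>L'. wedge n x x' = 0"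
  shows "\<forall>y\<in>limit_space n M L. \<forall>y'\<in>limit_space n M L'. wedge n y y' = 0"
proof
  fix y assume yL: "y \<in> limit_space n M L"
  define G where "G = {y. \<exists>x\<in>L. x \<noteq> 0 \<and> is_limit n M x y}"
  define G' where "G' = {y. \<exists>x\<in>L'. x \<noteq> 0 \<and> is_limit n M x y}"
  have yG: "y \<in> module.span escale G" using yL by (simp add: limit_space_def G_def)
  have gen: "\<forall>y'\<in>module.span escale G'. wedge n g y' = 0" if g: "g \<in> G" for g
  proof
    fix y' assume "y' \<in> module.span escale G'"
    thus "wedge n g y' = 0"
    proof (rule module.span_induct[OF module_escale])
      show "module.subspace escale {y'. wedge n g y' = 0}"
        by (simp add: module.subspace_def[OF module_escale] wedge_add_right wedge_scale_right)
    next
      fix z assume "z \<in> G'"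
      then obtain x' where x': "x' \<in> L'" "is_limit n M x' z" by (auto simp: G'_def)
      obtain x where x: "x \<in> L" "is_limit n M x g" using g by (auto simp: G_def)
      show "wedge n g z = 0"
        by (rule limits_wedge[OF _ x(2) x'(2)]) (use assms(6) x x' in blast)
    qed
  qed
  have "\<forall>y'\<in>module.span escale G'. wedge n y y' = 0"
    using yG
  proof (rule module.span_induct[OF module_escale])
    show "module.subspace escale {y. \<forall>y'\<in>module.span escale G'. wedge n y y' = 0}"
      by (simp add: module.subspace_def[OF module_escale] wedge_add_left wedge_scale_left)
  next
    fix g assume "g \<in> G" thus "\<forall>y'\<in>module.span escale G'. wedge n g y' = 0" by (rule gen)
  qed
  thus "\<forall>y'\<in>limit_space n M L'. wedge n y y' = 0" by (simp add: limit_space_def G'_def)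
qed


end
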